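(* Let $n\ge 2$, $p\ge 1$, $N\ge 1$, and let $\mathbf{x}=\{x_1,\dots,x_n\}$ be a sample of $p$-variate functions observed at $N$ time points $t_1,\dots,t_N$, i.e. real numbers $x_i^j(t_k)$ for $i=1,\dots,n$, $j=1,\dots,p$, $k=1,\dots,N$. Let $U=\mathbf{MEI}_d(\mathbf{x})$ and $V=\mathbf{MBD}_d(\mathbf{x})$ (the $n\times p$ matrices defined in the context), with rows $u_1,\dots,u_n$ and $v_1,\dots,v_n$ regarded as vectors in $\mathbb{R}^p$. Define $g_n:[0,1]\to\mathbb{R}$ by $$g_n(z)=\frac{2}{n}+z-\frac{n}{2(n-1)}\,z^2 .$$ (a) Suppose that for every $j\in\{1,\dots,p\}$, every $i\neq h$ in $\{1,\dots,n\}$ and every $k_1,k_2\in\{1,\dots,N\}$, $$\big(x_i^j(t_{k_1})-x_h^j(t_{k_1})\big)\big(x_i^j(t_{k_2})-x_h^j(t_{k_2})\big)>0 .$$ Then for every $i=1,\dots,n$, $$MBD_{\{u_1,\dots,u_n\}}(u_i)\;\le\; g_n\!\left(1-MEI_{\{v_1,\dots,v_n\}}(v_i)\right).$$ (b) If, in addition to the hypothesis of (a), for every $k\in\{1,\dots,N\}$, every $i\neq h$ and every $j\neq \ell$ in $\{1,\dots,p\}$, $$\big(x_i^j(t_{k})-x_h^j(t_{k})\big)\big(x_i^\ell(t_{k})-x_h^\ell(t_{k})\big)>0,$$ then for every $i=1,\dots,n$, $$MBD_{\{u_1,\dots,u_n\}}(u_i)\;=\; g_n\!\left(1-MEI_{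\{v_1,\dots,v_n\}}(v_i)\right).$$
   Context: Discrete modified band depth and modified epigraph index: for vectors $y_1,\dots,y_n\in\mathbb{R}^m$ (viewed as functions on the index set $\{1,\dots,m\}$) and $y\in\{y_1,\dots,y_n\}$, $$MBD_{\{y_1,\dots,y_n\}}(y)=\binom{n}{2}^{-1}\sum_{1\le a<b\le n}\frac{1}{m}\,\#\big\{k\in\{1,\dots,m\}:\ \min(y_a(k),y_b(k))\le y(k)\le \max(y_a(k),y_b(k))\big\},$$ $$MEI_{\{y_1,\dots,y_n\}}(y)=\frac{1}{n}\sum_{a=1}^{n}\frac{1}{m}\,\#\big\{k\in\{1,\dots,m\}:\ y_a(k)\ge y(k)\big\}.$$ For the sample $\mathbf{x}$, for each dimension $j$ let $x_i^j=(x_i^j(t_1),\dots,x_i^j(t_N))\in\mathbb{R}^N$. The $n\times p$ matrices $\mathbf{MBD}_d(\mathbf{x})$ and $\mathbf{MEI}_d(\mathbf{x})$ have entries $\mathbf{MBD}_d(\mathbf{x})_{ij}=MBD_{\{x_1^j,\dots,x_n^j\}}(x_i^j)$ and $\mathbf{MEI}_d(\mathbf{x})_{ij}=MEI_{\{x_1^j,\dots,x_n^j\}}(x_i^j)$ (depths computed within each dimension $j$ over the $N$ time points). The depths $MBD_{\{u_1,\dots,u_n\}}$ and $MEI_{\{v_1,\dots,v_n\}}$ in the claim are then computed on the rows of these matrices, treated as vectors indexed by $j=1,\dots,p$. *)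

theory Defs
  imports Complex_Main
begin

text \<open>Vectors y_1..y_n in R^m are given as Y :: nat => nat => real, with Y a k the
k-th coordinate of y_a, indices a in {1..n}, k in {1..m}. A single vector y is nat => real.\<close>

definition MBD :: "nat \<Rightarrow> nat \<Rightarrow> (nat \<Rightarrow> nat \<Rightarrow> real) \<Rightarrow> (nat \<Rightarrow> real) \<Rightarrow> real" where
  "MBD n m Y y = (1 / real (n choose 2)) *
     (\<Sum>a\<in>{1..n}. \<Sum>b\<in>{a+1..n}.
        (1 / real m) * real (card {k\<in>{1..m}. min (Y a k) (Y b k) \<le> y k \<and> y k \<le> max (Y a k) (Y b k)}))"

definition MEI :: "nat \<Rightarrow> nat \<Rightarrow> (nat \<Rightarrow> nat \<Rightarrow> real) \<Rightarrow> (nat \<Rightarrow> real) \<Rightarrow> real" where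
  "MEI n m Y y = (1 / real n) *
     (\<Sum>a\<in>{1..n}. (1 / real m) * real (card {k\<in>{1..m}. Y a k \<ge> y k}))"

text \<open>Sample x i j k = x_i^j(t_k). Matrices MBD_d(x) and MEI_d(x): entry (i,j).\<close>

definition MBD_mat :: "nat \<Rightarrow> nat \<Rightarrow> (nat \<Rightarrow> nat \<Rightarrow> nat \<Rightarrow> real) \<Rightarrow> nat \<Rightarrow> nat \<Rightarrow> real" where
  "MBD_mat n N x i j = MBD n N (\<lambda>a k. x a j k) (\<lambda>k. x i j k)"

definition MEI_mat :: "nat \<Rightarrow> nat \<Rightarrow> (nat \<Rightarrow> nat \<Rightarrow> nat \<Rightarrow> real) \<Rightarrow> nat \<Rightarrow> nat \<Rightarrow> real" where
  "MEI_mat n N x i j = MEI n N (\<lambda>a k. x a j k) (\<lambda>k. x i j k)"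

definition g_fun :: "nat \<Rightarrow> real \<Rightarrow> real" where
  "g_fun n z = 2 / real n + z - real n / (2 * (real n - 1)) * z\<^sup>2"

end

theory Submission
  imports Defs
begin


lemma real_choose2: "real (n choose 2) = real n * (real n - 1) / 2"
proof -
  have d: "2 dvd (n * (n - 1))" by (cases "even n") auto
  have "real (n choose 2) = real (n * (n - 1)) / 2"
    unfolding choose_two using real_of_nat_div[OF d] by simp
  then show ?thesis by (cases n) (auto simp: algebra_simps)
qed

lemma card_ind: "finite S \<Longrightarrow> real (card {k\<in>S. P k}) = (\<Sum>k\<in>S. if P k then 1 else 0)"
  by (simp add: sum.inter_filter[symmetric])

definition rk :: "nat \<Rightarrow> (nat \<Rightarrow> real) \<Rightarrow> nat \<Rightarrow> nat" where
  "rk n w i = card {a\<in>{1..n}. w a < w i}"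

lemma rk_mono: assumes "a \<in> {1..n}" "w a < w b" shows "rk n w a < rk n w b"
  unfolding rk_def
proof (rule psubset_card_mono)
  show "{c \<in> {1..n}. w c < w a} \<subset> {c \<in> {1..n}. w c < w b}"
    using assms by auto
qed simp

lemma rk_le: assumes "i \<in> {1..n}" shows "rk n w i \<le> n - 1"
proof -
  have "{a\<in>{1..n}. w a < w i} \<subseteq> {1..n} - {i}" by auto
  then have "rk n w i \<le> card ({1..n} - {i})" unfolding rk_def by (intro card_mono) auto
  then show ?thesis using assms by simp
qed

lemma rk_inj: assumes "inj_on w {1..n}" shows "inj_on (rk n w) {1..n}"
proof (rule inj_onI)
  fix a b assume a: "a \<in> {1..n}" and b: "b \<in> {1..n}" and e: "rk n w a = rk n w b"
  show "a = b"
  proof (rule ccontr)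
    assume "a \<noteq> b"
    then have "w a \<noteq> w b" using assms a b by (auto dest: inj_onD)
    then show False using rk_mono[OF a, of w b] rk_mono[OF b, of w a] e by linarith
  qed
qed

lemma rk_bij: assumes "inj_on w {1..n}" shows "bij_betw (rk n w) {1..n} {0..<n}"
proof -
  have sub: "rk n w ` {1..n} \<subseteq> {0..<n}"
  proof (rule image_subsetI)
    fix a assume a: "a \<in> {1..n}"
    then show "rk n w a \<in> {0..<n}" using rk_le[OF a, of w] by auto
  qed
  have c: "card (rk n w ` {1..n}) = card {0..<n}" using card_image[OF rk_inj[OF assms]] by simp
  have "rk n w ` {1..n} = {0..<n}" by (rule card_subset_eq[OF _ sub c]) simp
  then show ?thesis using rk_inj[OF assms] by (simp add: bij_betw_def)
qed

lemma card_ge: "card {a\<in>{1..n}. w a \<ge> w i} = n - rk n w i"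
proof -
  have "{a\<in>{1..n}. w a \<ge> w i} = {1..n} - {a\<in>{1..n}. w a < w i}" by auto
  moreover have "card ({1..n} - {a\<in>{1..n}. w a < w i}) = n - card {a\<in>{1..n}. w a < w i}"
    by (subst card_Diff_subset) auto
  ultimately show ?thesis unfolding rk_def by simp
qed

lemma card_gt: assumes "inj_on w {1..n}" "i \<in> {1..n}"
  shows "card {a\<in>{1..n}. w a > w i} = n - 1 - rk n w i"
proof -
  have "{a\<in>{1..n}. w a \<ge> w i} = insert i {a\<in>{1..n}. w a > w i}"
  proof (intro equalityI subsetI)
    fix x assume x: "x \<in> {a\<in>{1..n}. w a \<ge> w i}"
    show "x \<in> insert i {a\<in>{1..n}. w a > w i}"
    proof (cases "x = i")
      case False
      then have "w x \<noteq> w i" using assms x inj_onD[OF assms(1), of x i] by blast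
      then show ?thesis using x by auto
    qed simp
  qed (use assms(2) in auto)
  then have "card {a\<in>{1..n}. w a \<ge> w i} = Suc (card {a\<in>{1..n}. w a > w i})" by simp
  then show ?thesis using card_ge[of n w i] by simp
qed


lemma sum_pairs:
  fixes h :: "nat \<Rightarrow> nat \<Rightarrow> real"
  assumes sym: "\<And>a b. h a b = h b a"
  shows "(\<Sum>a\<in>{1..n}. \<Sum>b\<in>{a+1..n}. h a b) =
         ((\<Sum>a\<in>{1..n}. \<Sum>b\<in>{1..n}. h a b) - (\<Sum>a\<in>{1..n}. h a a)) / 2"
proof (induction n)
  case 0 then show ?case by simp
next
  case (Suc n)
  have e1: "(\<Sum>a\<in>{1..Suc n}. \<Sum>b\<in>{a+1..Suc n}. h a b) =
     (\<Sum>a\<in>{1..n}. \<Sum>b\<in>{a+1..n}. h a b) + (\<Sum>a\<in>{1..n}. h a (Suc n))"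
    by (simp add: sum.distrib)
  have e2: "(\<Sum>a\<in>{1..Suc n}. \<Sum>b\<in>{1..Suc n}. h a b) =
     (\<Sum>a\<in>{1..n}. \<Sum>b\<in>{1..n}. h a b) + 2 * (\<Sum>a\<in>{1..n}. h a (Suc n)) + h (Suc n) (Suc n)"
    by (simp add: sum.distrib sym)
  show ?case using Suc.IH e1 e2 by simp
qed




lemma between_ind:
  fixes u v y :: real
  shows "(if min u v \<le> y \<and> y \<le> max u v then 1 else 0 :: real) =
    1 - (if u < y then 1 else 0) * (if v < y then 1 else 0) - (if y < u then 1 else 0) * (if y < v then 1 else 0)"
  by (auto simp: min_def max_def)

lemma between_count:
  assumes inj: "inj_on w {1..n}" and i: "i \<in> {1..n}"
  shows "(\<Sum>a\<in>{1..n}. \<Sum>b\<in>{a+1..n}. if min (w a) (w b) \<le> w i \<and> w i \<le> max (w a) (w b) then 1 else 0)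
       = real (n-1) + real (rk n w i) * (real (n-1) - real (rk n w i))"
proof -
  let ?I = "\<lambda>a b. if min (w a) (w b) \<le> w i \<and> w i \<le> max (w a) (w b) then (1::real) else 0"
  have sp: "(\<Sum>a\<in>{1..n}. \<Sum>b\<in>{a+1..n}. ?I a b) = ((\<Sum>a\<in>{1..n}. \<Sum>b\<in>{1..n}. ?I a b) - (\<Sum>a\<in>{1..n}. ?I a a)) / 2"
    by (rule sum_pairs) (simp add: min.commute max.commute)
  define P where "P = (\<lambda>a. if w a < w i then 1 else 0 :: real)"
  define Q where "Q = (\<lambda>a. if w i < w a then 1 else 0 :: real)"
  define L where "L = (\<Sum>a\<in>{1..n}. P a)"
  define G where "G = (\<Sum>a\<in>{1..n}. Q a)"
  have L: "L = real (rk n w i)" unfolding L_def P_def rk_def by (rule card_ind[symmetric]) simp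
  have "G = real (card {a\<in>{1..n}. w a > w i})" unfolding G_def Q_def by (rule card_ind[symmetric]) simp
  also have "\<dots> = real (n - 1 - rk n w i)" using card_gt[OF inj i] by simp
  finally have G: "G = real (n - 1) - real (rk n w i)" using rk_le[OF i, of w] by simp
  have "(\<Sum>a\<in>{1..n}. \<Sum>b\<in>{1..n}. ?I a b) = (\<Sum>a\<in>{1..n}. \<Sum>b\<in>{1..n}. 1 - P a * P b - Q a * Q b)"
    unfolding P_def Q_def by (subst between_ind) simp
  also have "\<dots> = real n * real n - L * L - G * G"
    unfolding L_def G_def sum_product by (simp add: sum_subtractf)
  finally have full: "(\<Sum>a\<in>{1..n}. \<Sum>b\<in>{1..n}. ?I a b) = real n * real n - L * L - G * G" .
  have "(\<Sum>a\<in>{1..n}. ?I a a) = (\<Sum>a\<in>{1..n}. if a = i then 1 else 0)"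
  proof (rule sum.cong)
    fix a assume a: "a \<in> {1..n}"
    show "?I a a = (if a = i then 1 else 0)"
      using inj_onD[OF inj _ a i] by (auto simp: order_antisym_conv)
  qed simp
  also have "\<dots> = 1" using i by simp
  finally have diag: "(\<Sum>a\<in>{1..n}. ?I a a) = 1" .
  have n1: "real (n - 1) = real n - 1" using i by auto
  show ?thesis unfolding sp full diag L G n1 by (simp add: field_simps)
qed

lemma rk_lt_iff:
  assumes inj: "inj_on w {1..n}" and a: "a \<in> {1..n}" and b: "b \<in> {1..n}"
  shows "rk n w a < rk n w b \<longleftrightarrow> w a < w b"
proof
  assume r: "rk n w a < rk n w b"
  show "w a < w b"
  proof (rule ccontr)
    assume "\<not> w a < w b"
    then have "w b < w a \<or> w a = w b" by auto
    then show False
    proof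
      assume "w b < w a" then show False using rk_mono[OF b, of w a] r by simp
    next
      assume "w a = w b" then have "a = b" using inj_onD[OF inj _ a b] by simp
      then show False using r by simp
    qed
  qed
qed (rule rk_mono[OF a])

lemma card_via_rk:
  assumes inj: "inj_on w {1..n}"
  shows "card {a\<in>{1..n}. Q (rk n w a)} = card {l\<in>{0..<n}. Q l}"
proof -
  have bij: "bij_betw (rk n w) {1..n} {0..<n}" by (rule rk_bij[OF inj])
  have "rk n w ` {a\<in>{1..n}. Q (rk n w a)} = {l \<in> rk n w ` {1..n}. Q l}" by auto
  also have "\<dots> = {l\<in>{0..<n}. Q l}" using bij_betw_imp_surj_on[OF bij] by simp
  finally have "rk n w ` {a\<in>{1..n}. Q (rk n w a)} = {l\<in>{0..<n}. Q l}" .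
  moreover have "inj_on (rk n w) {a\<in>{1..n}. Q (rk n w a)}"
    using bij_betw_imp_inj_on[OF bij] by (rule inj_on_subset) auto
  ultimately show ?thesis using card_image by metis
qed

lemma count_phi:
  fixes r m :: nat
  assumes r: "r \<le> m"
  shows "card {l\<in>{0..<Suc m}. real r * (real m - real r) \<le> real l * (real m - real l)} = Suc m - 2 * min r (m - r)"
proof -
  have key: "real r * (real m - real r) \<le> real l * (real m - real l) \<longleftrightarrow>
             0 \<le> (real l - real r) * (real m - real l - real r)" for l
    by (simp add: algebra_simps)
  have "{l\<in>{0..<Suc m}. real r * (real m - real r) \<le> real l * (real m - real l)} = {min r (m - r) .. max r (m - r)}"
  proof (cases "r \<le> m - r")
    case True
    show ?thesis using True r unfolding key by (auto simp: zero_le_mult_iff)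
  next
    case False
    show ?thesis using False r unfolding key by (auto simp: zero_le_mult_iff)
  qed
  then show ?thesis using r by auto
qed

lemma MBD_swap:
  "MBD n K Y y = (1 / real (n choose 2)) * (1 / real K) *
     (\<Sum>k\<in>{1..K}. \<Sum>a\<in>{1..n}. \<Sum>b\<in>{a+1..n}. if min (Y a k) (Y b k) \<le> y k \<and> y k \<le> max (Y a k) (Y b k) then 1 else 0)"
proof -
  let ?f = "\<lambda>a b k. if min (Y a k) (Y b k) \<le> y k \<and> y k \<le> max (Y a k) (Y b k) then 1 else 0 :: real"
  have "(\<Sum>a\<in>{1..n}. \<Sum>b\<in>{a+1..n}. (1 / real K) * real (card {k\<in>{1..K}. min (Y a k) (Y b k) \<le> y k \<and> y k \<le> max (Y a k) (Y b k)}))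
      = (1 / real K) * (\<Sum>a\<in>{1..n}. \<Sum>b\<in>{a+1..n}. \<Sum>k\<in>{1..K}. ?f a b k)"
    by (simp only: card_ind[OF finite_atLeastAtMost] sum_distrib_left)
  also have "(\<Sum>a\<in>{1..n}. \<Sum>b\<in>{a+1..n}. \<Sum>k\<in>{1..K}. ?f a b k) = (\<Sum>a\<in>{1..n}. \<Sum>k\<in>{1..K}. \<Sum>b\<in>{a+1..n}. ?f a b k)"
    by (rule sum.cong[OF refl], rule sum.swap)
  also have "\<dots> = (\<Sum>k\<in>{1..K}. \<Sum>a\<in>{1..n}. \<Sum>b\<in>{a+1..n}. ?f a b k)"
    by (rule sum.swap)
  finally show ?thesis unfolding MBD_def by simp
qed

lemma MEI_swap:
  "MEI n K Y y = (1 / real n) * (1 / real K) * (\<Sum>k\<in>{1..K}. real (card {a\<in>{1..n}. Y a k \<ge> y k}))"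
proof -
  have "(\<Sum>a\<in>{1..n}. (1 / real K) * real (card {k\<in>{1..K}. Y a k \<ge> y k}))
      = (1 / real K) * (\<Sum>a\<in>{1..n}. \<Sum>k\<in>{1..K}. if Y a k \<ge> y k then 1 else 0)"
    by (simp only: card_ind[OF finite_atLeastAtMost] sum_distrib_left)
  also have "(\<Sum>a\<in>{1..n}. \<Sum>k\<in>{1..K}. if Y a k \<ge> y k then 1 else (0::real)) = (\<Sum>k\<in>{1..K}. \<Sum>a\<in>{1..n}. if Y a k \<ge> y k then 1 else 0)"
    by (rule sum.swap)
  also have "\<dots> = (\<Sum>k\<in>{1..K}. real (card {a\<in>{1..n}. Y a k \<ge> y k}))"
    by (simp only: card_ind[OF finite_atLeastAtMost])
  finally show ?thesis unfolding MEI_def by simp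
qed


lemma t1: fixes z :: "nat \<Rightarrow> real" and c :: real
  shows "(\<Sum>j\<in>A. (z j - c)^2) = (\<Sum>j\<in>A. (z j)^2) - 2*c*(\<Sum>j\<in>A. z j) + real (card A) * c^2"
proof -
  have "(\<Sum>j\<in>A. (z j - c)^2) = (\<Sum>j\<in>A. (z j)^2 - 2*c*z j + c^2)"
    by (rule sum.cong) (auto simp: power2_diff)
  also have "\<dots> = (\<Sum>j\<in>A. (z j)^2) - (\<Sum>j\<in>A. 2*c*z j) + (\<Sum>j\<in>A. c^2)"
    by (simp add: sum.distrib sum_subtractf)
  also have "\<dots> = (\<Sum>j\<in>A. (z j)^2) - 2*c*(\<Sum>j\<in>A. z j) + real (card A) * c^2"
    by (simp add: sum_distrib_left)
  finally show ?thesis .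
qed

lemma cs: fixes z :: "nat \<Rightarrow> real" assumes "finite A" "A \<noteq> {}"
  shows "((\<Sum>j\<in>A. z j) / real (card A))^2 \<le> (\<Sum>j\<in>A. (z j)^2) / real (card A)"
proof -
  define c where "c = (\<Sum>j\<in>A. z j) / real (card A)"
  have k: "real (card A) > 0" using assms by auto
  have "0 \<le> (\<Sum>j\<in>A. (z j - c)^2)" by (intro sum_nonneg) simp
  also have "\<dots> = (\<Sum>j\<in>A. (z j)^2) - 2*c*(\<Sum>j\<in>A. z j) + real (card A) * c^2" by (rule t1)
  also have "(\<Sum>j\<in>A. z j) = c * real (card A)" using k unfolding c_def by simp
  finally have "0 \<le> (\<Sum>j\<in>A. (z j)^2) - real (card A) * c^2" by (simp add: power2_eq_square algebra_simps)
  then show ?thesis using k unfolding c_def[symmetric] by (simp add: field_simps)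
qed


lemma alg1: fixes X D :: real assumes "X > 1"
  shows "(1 / (X*(X-1)/2)) * ((X-1) + D*((X-1) - D)) = 2/X + 2*D/X - X/(2*(X-1)) * (2*D/X)^2"
proof -
  have a: "X \<noteq> 0" "X - 1 \<noteq> 0" using assms by auto
  show ?thesis using a by (simp add: field_simps power2_eq_square)
qed


lemma final_calc:
  fixes n p :: nat and r :: "nat \<Rightarrow> nat"
  assumes n: "n \<ge> 2" and p: "p \<ge> 1" and r: "\<And>j. j \<in> {1..p} \<Longrightarrow> r j \<le> n - 1"
    and z_def: "\<And>j. z j = 2 * real (min (r j) (n - 1 - r j)) / real n"
    and \<kappa>_def: "\<kappa> = real n / (2 * (real n - 1))"
  shows "(1 / real (n choose 2)) * (1 / real p) * (\<Sum>j\<in>{1..p}. real (n-1) + real (n - 1 - r j) * (real (n-1) - real (n - 1 - r j)))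
         = 2 / real n + (\<Sum>j\<in>{1..p}. z j) / real p - \<kappa> * ((\<Sum>j\<in>{1..p}. (z j)^2) / real p)"
    and "1 - (1 / real n) * (1 / real p) * (\<Sum>j\<in>{1..p}. real (n - 2 * min (r j) (n - 1 - r j)))
         = (\<Sum>j\<in>{1..p}. z j) / real p"
proof -
  define M where "M = real n - 1"
  have M1: "M \<ge> 1" using n unfolding M_def by simp
  have nM: "real n = M + 1" unfolding M_def by simp
  have n1: "real (n - 1) = M" using n unfolding M_def by simp
  have p0: "real p > 0" using p by simp
  have C: "real (n choose 2) = (M + 1) * M / 2" unfolding real_choose2 nM by simp
  have trm: "(1 / real (n choose 2)) * (real (n-1) + real (n - 1 - r j) * (real (n-1) - real (n - 1 - r j)))
       = 2 / real n + z j - \<kappa> * (z j)^2" if j: "j \<in> {1..p}" for j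
  proof -
    define D where "D = real (min (r j) (n - 1 - r j))"
    have rj: "r j \<le> n - 1" using r[OF j] .
    have e: "real (n - 1 - r j) = M - real (r j)" using rj n1 by (simp add: of_nat_diff)
    have prod: "real (n - 1 - r j) * (real (n-1) - real (n - 1 - r j)) = D * (M - D)"
    proof (cases "r j \<le> n - 1 - r j")
      case True
      then have Dr: "D = real (r j)" unfolding D_def by simp
      show ?thesis unfolding e n1 Dr by (simp add: algebra_simps)
    next
      case False
      then have Dr: "D = M - real (r j)" unfolding D_def using e by simp
      show ?thesis unfolding e n1 Dr by (simp add: algebra_simps)
    qed
    have zj: "z j = 2 * D / (M + 1)" unfolding z_def D_def nM by simp
    have zj': "z j = 2 * D / real n" unfolding z_def D_def by simp
    have "(1 / real (n choose 2)) * (real (n-1) + real (n - 1 - r j) * (real (n-1) - real (n - 1 - r j)))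
        = (1 / (real n * (real n - 1) / 2)) * ((real n - 1) + D * ((real n - 1) - D))"
      unfolding prod unfolding real_choose2 n1 M_def ..
    also have "\<dots> = 2 / real n + 2 * D / real n - real n / (2 * (real n - 1)) * (2 * D / real n)^2"
      by (rule alg1) (use n in simp)
    finally show ?thesis unfolding zj' \<kappa>_def .
  qed
  have "(1 / real (n choose 2)) * (1 / real p) * (\<Sum>j\<in>{1..p}. real (n-1) + real (n - 1 - r j) * (real (n-1) - real (n - 1 - r j)))
      = (1 / real p) * (\<Sum>j\<in>{1..p}. (1 / real (n choose 2)) * (real (n-1) + real (n - 1 - r j) * (real (n-1) - real (n - 1 - r j))))"
    by (simp only: sum_distrib_left mult_ac)
  also have "\<dots> = (1 / real p) * (\<Sum>j\<in>{1..p}. 2 / real n + z j - \<kappa> * (z j)^2)"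
    using trm by simp
  also have "\<dots> = (1 / real p) * (real p * (2 / real n) + (\<Sum>j\<in>{1..p}. z j) - \<kappa> * (\<Sum>j\<in>{1..p}. (z j)^2))"
    by (simp add: sum.distrib sum_subtractf sum_distrib_left)
  also have "\<dots> = 2 / real n + (\<Sum>j\<in>{1..p}. z j) / real p - \<kappa> * ((\<Sum>j\<in>{1..p}. (z j)^2) / real p)"
    using p0 by (simp add: field_simps)
  finally show "(1 / real (n choose 2)) * (1 / real p) * (\<Sum>j\<in>{1..p}. real (n-1) + real (n - 1 - r j) * (real (n-1) - real (n - 1 - r j)))
         = 2 / real n + (\<Sum>j\<in>{1..p}. z j) / real p - \<kappa> * ((\<Sum>j\<in>{1..p}. (z j)^2) / real p)" .
  have mei: "real (n - 2 * min (r j) (n - 1 - r j)) = real n - real n * z j" if j: "j \<in> {1..p}" for j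
  proof -
    have "2 * min (r j) (n - 1 - r j) \<le> n" by linarith
    then have "real (n - 2 * min (r j) (n - 1 - r j)) = real n - 2 * real (min (r j) (n - 1 - r j))"
      by (simp add: of_nat_diff)
    then show ?thesis unfolding z_def using n by simp
  qed
  have "(\<Sum>j\<in>{1..p}. real (n - 2 * min (r j) (n - 1 - r j))) = (\<Sum>j\<in>{1..p}. real n - real n * z j)"
    using mei by simp
  also have "\<dots> = real p * real n - real n * (\<Sum>j\<in>{1..p}. z j)"
    by (simp add: sum_subtractf sum_distrib_left)
  finally have s: "(\<Sum>j\<in>{1..p}. real (n - 2 * min (r j) (n - 1 - r j))) = real p * real n - real n * (\<Sum>j\<in>{1..p}. z j)" .
  show "1 - (1 / real n) * (1 / real p) * (\<Sum>j\<in>{1..p}. real (n - 2 * min (r j) (n - 1 - r j)))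
         = (\<Sum>j\<in>{1..p}. z j) / real p"
    unfolding s using p0 n by (simp add: field_simps)
qed

lemma final_ineq:
  fixes n p :: nat and r :: "nat \<Rightarrow> nat"
  assumes n: "n \<ge> 2" and p: "p \<ge> 1" and r: "\<And>j. j \<in> {1..p} \<Longrightarrow> r j \<le> n - 1"
  shows "(1 / real (n choose 2)) * (1 / real p) * (\<Sum>j\<in>{1..p}. real (n-1) + real (n - 1 - r j) * (real (n-1) - real (n - 1 - r j)))
         \<le> g_fun n (1 - (1 / real n) * (1 / real p) * (\<Sum>j\<in>{1..p}. real (n - 2 * min (r j) (n - 1 - r j))))"
proof -
  define z where "z = (\<lambda>j. 2 * real (min (r j) (n - 1 - r j)) / real n)"
  define \<kappa> where "\<kappa> = real n / (2 * (real n - 1))"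
  have zd: "\<And>j. z j = 2 * real (min (r j) (n - 1 - r j)) / real n" unfolding z_def by simp
  have k: "\<kappa> \<ge> 0" unfolding \<kappa>_def using n by simp
  have cs': "((\<Sum>j\<in>{1..p}. z j) / real p)^2 \<le> (\<Sum>j\<in>{1..p}. (z j)^2) / real p"
    using cs[of "{1..p}" z] p by simp
  have "\<kappa> * ((\<Sum>j\<in>{1..p}. z j) / real p)^2 \<le> \<kappa> * ((\<Sum>j\<in>{1..p}. (z j)^2) / real p)"
    using mult_left_mono[OF cs' k] .
  moreover note e1 = final_calc(1)[where r=r and z=z and \<kappa>=\<kappa>, OF n p r zd \<kappa>_def]
  moreover note e2 = final_calc(2)[where r=r and z=z and \<kappa>=\<kappa>, OF n p r zd \<kappa>_def]
  moreover have "g_fun n ((\<Sum>j\<in>{1..p}. z j) / real p) = 2 / real n + (\<Sum>j\<in>{1..p}. z j) / real p - \<kappa> * ((\<Sum>j\<in>{1..p}. z j) / real p)^2"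
    unfolding g_fun_def \<kappa>_def ..
  moreover have "g_fun n (1 - (1 / real n) * (1 / real p) * (\<Sum>j\<in>{1..p}. real (n - 2 * min (r j) (n - 1 - r j)))) = g_fun n ((\<Sum>j\<in>{1..p}. z j) / real p)" by (simp only: e2)
  ultimately show ?thesis by linarith
qed

lemma final_eq:
  fixes n p :: nat and r :: "nat \<Rightarrow> nat"
  assumes n: "n \<ge> 2" and p: "p \<ge> 1" and r: "\<And>j. j \<in> {1..p} \<Longrightarrow> r j \<le> n - 1"
    and c: "\<And>j. j \<in> {1..p} \<Longrightarrow> r j = r 1"
  shows "(1 / real (n choose 2)) * (1 / real p) * (\<Sum>j\<in>{1..p}. real (n-1) + real (n - 1 - r j) * (real (n-1) - real (n - 1 - r j)))
         = g_fun n (1 - (1 / real n) * (1 / real p) * (\<Sum>j\<in>{1..p}. real (n - 2 * min (r j) (n - 1 - r j))))"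
proof -
  define z where "z = (\<lambda>j. 2 * real (min (r j) (n - 1 - r j)) / real n)"
  define \<kappa> where "\<kappa> = real n / (2 * (real n - 1))"
  have zd: "\<And>j. z j = 2 * real (min (r j) (n - 1 - r j)) / real n" unfolding z_def by simp
  have p0: "real p > 0" using p by simp
  have zc: "z j = z 1" if j: "j \<in> {1..p}" for j
  proof -
    have "r j = r 1" using c[OF j] .
    then show ?thesis unfolding z_def by simp
  qed
  have "(\<Sum>j\<in>{1..p}. z j) = (\<Sum>j\<in>{1..p}. z 1)" by (rule sum.cong[OF refl]) (rule zc)
  then have s1: "(\<Sum>j\<in>{1..p}. z j) = real p * z 1" by simp
  have "(\<Sum>j\<in>{1..p}. (z j)^2) = (\<Sum>j\<in>{1..p}. (z 1)^2)" by (rule sum.cong[OF refl]) (metis zc)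
  then have s2: "(\<Sum>j\<in>{1..p}. (z j)^2) = real p * (z 1)^2" by simp
  note e1 = final_calc(1)[where r=r and z=z and \<kappa>=\<kappa>, OF n p r zd \<kappa>_def]
  note e2 = final_calc(2)[where r=r and z=z and \<kappa>=\<kappa>, OF n p r zd \<kappa>_def]
  have g: "g_fun n ((\<Sum>j\<in>{1..p}. z j) / real p) = 2 / real n + (\<Sum>j\<in>{1..p}. z j) / real p - \<kappa> * ((\<Sum>j\<in>{1..p}. z j) / real p)^2"
    unfolding g_fun_def \<kappa>_def ..
  have B: "2 / real n + (\<Sum>j\<in>{1..p}. z j) / real p - \<kappa> * ((\<Sum>j\<in>{1..p}. (z j)^2) / real p) = g_fun n ((\<Sum>j\<in>{1..p}. z j) / real p)"
  proof -
    have q1: "real p * z 1 / real p = z 1" using p0 by simp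
    have q2: "real p * (z 1)^2 / real p = (z 1)^2" using p0 by simp
    show ?thesis unfolding g unfolding s1 s2 q1 q2 ..
  qed
  have A: "g_fun n (1 - (1 / real n) * (1 / real p) * (\<Sum>j\<in>{1..p}. real (n - 2 * min (r j) (n - 1 - r j)))) = g_fun n ((\<Sum>j\<in>{1..p}. z j) / real p)" by (simp only: e2)
  show ?thesis using e1 A B by linarith
qed



lemma common:
  fixes n p N :: nat and x :: "nat \<Rightarrow> nat \<Rightarrow> nat \<Rightarrow> real"
  assumes n: "n \<ge> 2" and p: "p \<ge> 1" and N: "N \<ge> 1"
  assumes H1: "\<forall>j\<in>{1..p}. \<forall>i\<in>{1..n}. \<forall>h\<in>{1..n}. i \<noteq> h \<longrightarrow>
              (\<forall>k1\<in>{1..N}. \<forall>k2\<in>{1..N}. (x i j k1 - x h j k1) * (x i j k2 - x h j k2) > 0)"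
  assumes i: "i \<in> {1..n}"
  defines "r \<equiv> \<lambda>i j. rk n (\<lambda>a. x a j 1) i"
  shows "MBD n p (MEI_mat n N x) (MEI_mat n N x i) = (1 / real (n choose 2)) * (1 / real p) * (\<Sum>j\<in>{1..p}. real (n-1) + real (n - 1 - r i j) * (real (n-1) - real (n - 1 - r i j)))"
    and "MEI n p (MBD_mat n N x) (MBD_mat n N x i) = (1 / real n) * (1 / real p) * (\<Sum>j\<in>{1..p}. real (n - 2 * min (r i j) (n - 1 - r i j)))"
    and "\<And>j. j \<in> {1..p} \<Longrightarrow> r i j \<le> n - 1"
proof -
  let ?A = "{1..n}"
  define U where "U = MEI_mat n N x"
  define V where "V = MBD_mat n N x"
  have N1: "1 \<in> {1..N}" using N by simp
  have h1: "(x a j k1 - x b j k1) * (x a j k2 - x b j k2) > 0"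
    if "j \<in> {1..p}" "a \<in> ?A" "b \<in> ?A" "a \<noteq> b" "k1 \<in> {1..N}" "k2 \<in> {1..N}" for j a b k1 k2
    using H1 that by blast
  have inj: "inj_on (\<lambda>a. x a j k) ?A" if j: "j \<in> {1..p}" and k: "k \<in> {1..N}" for j k
  proof (rule inj_onI)
    fix a b assume a: "a \<in> ?A" and b: "b \<in> ?A" and e: "x a j k = x b j k"
    show "a = b"
    proof (rule ccontr)
      assume "a \<noteq> b"
      from h1[OF j a b this k k] e show False by simp
    qed
  qed
  have inv: "(x a j k < x b j k) = (x a j 1 < x b j 1)"
    if j: "j \<in> {1..p}" and k: "k \<in> {1..N}" and a: "a \<in> ?A" and b: "b \<in> ?A" for j k a b
  proof (cases "a = b")
    case False
    from h1[OF j a b False k N1] show ?thesis by (auto simp: zero_less_mult_iff)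
  qed simp
  have rkk: "rk n (\<lambda>a. x a j k) i' = r i' j"
    if j: "j \<in> {1..p}" and k: "k \<in> {1..N}" and i': "i' \<in> ?A" for j k i'
  proof -
    have "{a \<in> ?A. x a j k < x i' j k} = {a \<in> ?A. x a j 1 < x i' j 1}"
    proof (intro Collect_cong conj_cong refl)
      fix a assume a: "a \<in> ?A"
      show "(x a j k < x i' j k) = (x a j 1 < x i' j 1)" by (rule inv[OF j k a i'])
    qed
    then show ?thesis unfolding rk_def r_def by simp
  qed
  have rle: "r i' j \<le> n - 1" if "i' \<in> ?A" for i' j unfolding r_def by (rule rk_le[OF that])
  show "\<And>j. j \<in> {1..p} \<Longrightarrow> r i j \<le> n - 1" using rle[OF i] by blast
  have U_eq: "U i' j = (real n - real (r i' j)) / real n" if i': "i' \<in> ?A" and j: "j \<in> {1..p}" for i' j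
  proof -
    have c: "real (card {a \<in> ?A. x a j k \<ge> x i' j k}) = real n - real (r i' j)" if k: "k \<in> {1..N}" for k
    proof -
      have "{a \<in> ?A. x a j k \<ge> x i' j k} = {a \<in> ?A. x a j 1 \<ge> x i' j 1}"
      proof (intro Collect_cong conj_cong refl)
        fix a assume a: "a \<in> ?A"
        show "(x a j k \<ge> x i' j k) = (x a j 1 \<ge> x i' j 1)" using inv[OF j k a i'] by (simp add: not_less[symmetric])
      qed
      then have "card {a \<in> ?A. x a j k \<ge> x i' j k} = n - r i' j" unfolding r_def using card_ge by simp
      then show ?thesis using rle[OF i', of j] n by (simp add: of_nat_diff)
    qed
    have "U i' j = (1 / real n) * (1 / real N) * (\<Sum>k\<in>{1..N}. real (card {a \<in> ?A. x a j k \<ge> x i' j k}))"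
      unfolding U_def MEI_mat_def by (rule MEI_swap)
    also have "\<dots> = (1 / real n) * (1 / real N) * (\<Sum>k\<in>{1..N}. real n - real (r i' j))"
      using c by simp
    also have "\<dots> = (real n - real (r i' j)) / real n" using N by simp
    finally show ?thesis .
  qed
  have V_eq: "V i' j = (real (n-1) + real (r i' j) * (real (n-1) - real (r i' j))) / real (n choose 2)"
    if i': "i' \<in> ?A" and j: "j \<in> {1..p}" for i' j
  proof -
    have c: "(\<Sum>a\<in>{1..n}. \<Sum>b\<in>{a+1..n}. if min (x a j k) (x b j k) \<le> x i' j k \<and> x i' j k \<le> max (x a j k) (x b j k) then 1 else 0)
       = real (n-1) + real (r i' j) * (real (n-1) - real (r i' j))" if k: "k \<in> {1..N}" for k
      using between_count[OF inj[OF j k] i'] rkk[OF j k i'] by simp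
    have "V i' j = (1 / real (n choose 2)) * (1 / real N) * (\<Sum>k\<in>{1..N}. \<Sum>a\<in>{1..n}. \<Sum>b\<in>{a+1..n}. if min (x a j k) (x b j k) \<le> x i' j k \<and> x i' j k \<le> max (x a j k) (x b j k) then 1 else 0)"
      unfolding V_def MBD_mat_def by (rule MBD_swap)
    also have "\<dots> = (1 / real (n choose 2)) * (1 / real N) * (\<Sum>k\<in>{1..N}. real (n-1) + real (r i' j) * (real (n-1) - real (r i' j)))"
      using c by simp
    also have "\<dots> = (real (n-1) + real (r i' j) * (real (n-1) - real (r i' j))) / real (n choose 2)" using N by simp
    finally show ?thesis .
  qed
  have rlt: "r a j < r b j \<longleftrightarrow> x a j 1 < x b j 1" if j: "j \<in> {1..p}" and a: "a \<in> ?A" and b: "b \<in> ?A" for j a b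
    unfolding r_def by (rule rk_lt_iff[OF inj[OF j N1] a b])
  have n0: "real n > 0" using n by simp
  have injU: "inj_on (\<lambda>a. U a j) ?A" if j: "j \<in> {1..p}" for j
  proof (rule inj_onI)
    fix a b assume a: "a \<in> ?A" and b: "b \<in> ?A" and e: "U a j = U b j"
    then have "r a j = r b j" using U_eq[OF a j] U_eq[OF b j] n0 by (simp add: divide_cancel_right)
    then show "a = b" using rk_inj[OF inj[OF j N1]] a b unfolding r_def by (auto dest: inj_onD)
  qed
  have rkU: "rk n (\<lambda>a. U a j) i = n - 1 - r i j" if j: "j \<in> {1..p}" for j
  proof -
    have "{a \<in> ?A. U a j < U i j} = {a \<in> ?A. x a j 1 > x i j 1}"
    proof (intro Collect_cong conj_cong refl)
      fix a assume a: "a \<in> ?A"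
      have "U a j < U i j \<longleftrightarrow> r i j < r a j" using U_eq[OF a j] U_eq[OF i j] n0 by (simp add: divide_less_cancel)
      also have "\<dots> \<longleftrightarrow> x i j 1 < x a j 1" by (rule rlt[OF j i a])
      finally show "U a j < U i j \<longleftrightarrow> x a j 1 > x i j 1" by simp
    qed
    then show ?thesis unfolding rk_def using card_gt[OF inj[OF j N1] i] unfolding r_def by simp
  qed
  have "MBD n p U (U i) = (1 / real (n choose 2)) * (1 / real p) * (\<Sum>j\<in>{1..p}. \<Sum>a\<in>{1..n}. \<Sum>b\<in>{a+1..n}. if min (U a j) (U b j) \<le> U i j \<and> U i j \<le> max (U a j) (U b j) then 1 else 0)"
    by (rule MBD_swap)
  also have "\<dots> = (1 / real (n choose 2)) * (1 / real p) * (\<Sum>j\<in>{1..p}. real (n-1) + real (n - 1 - r i j) * (real (n-1) - real (n - 1 - r i j)))"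
  proof -
    have "(\<Sum>a\<in>{1..n}. \<Sum>b\<in>{a+1..n}. if min (U a j) (U b j) \<le> U i j \<and> U i j \<le> max (U a j) (U b j) then 1 else 0)
        = real (n-1) + real (n - 1 - r i j) * (real (n-1) - real (n - 1 - r i j))" if j: "j \<in> {1..p}" for j
      using between_count[OF injU[OF j] i] rkU[OF j] by simp
    then show ?thesis by simp
  qed
  finally show "MBD n p (MEI_mat n N x) (MEI_mat n N x i) = (1 / real (n choose 2)) * (1 / real p) * (\<Sum>j\<in>{1..p}. real (n-1) + real (n - 1 - r i j) * (real (n-1) - real (n - 1 - r i j)))"
    unfolding U_def .
  have C0: "real (n choose 2) > 0" using n by simp
  have "MEI n p V (V i) = (1 / real n) * (1 / real p) * (\<Sum>j\<in>{1..p}. real (card {a \<in> ?A. V a j \<ge> V i j}))"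
    by (rule MEI_swap)
  also have "\<dots> = (1 / real n) * (1 / real p) * (\<Sum>j\<in>{1..p}. real (n - 2 * min (r i j) (n - 1 - r i j)))"
  proof -
    have "card {a \<in> ?A. V a j \<ge> V i j} = n - 2 * min (r i j) (n - 1 - r i j)" if j: "j \<in> {1..p}" for j
    proof -
      define \<phi> where "\<phi> = (\<lambda>l::nat. real l * (real (n-1) - real l))"
      have "{a \<in> ?A. V a j \<ge> V i j} = {a \<in> ?A. \<phi> (r i j) \<le> \<phi> (rk n (\<lambda>a. x a j 1) a)}"
      proof (intro Collect_cong conj_cong refl)
        fix a assume a: "a \<in> ?A"
        show "V a j \<ge> V i j \<longleftrightarrow> \<phi> (r i j) \<le> \<phi> (rk n (\<lambda>a. x a j 1) a)"
          unfolding V_eq[OF a j] V_eq[OF i j] \<phi>_def r_def using C0 by (simp add: divide_le_cancel)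
      qed
      also have "card \<dots> = card {l \<in> {0..<n}. \<phi> (r i j) \<le> \<phi> l}"
        by (rule card_via_rk[OF inj[OF j N1]])
      also have "\<dots> = n - 2 * min (r i j) (n - 1 - r i j)"
        using count_phi[OF rle[OF i, of j]] n unfolding \<phi>_def by simp
      finally show ?thesis .
    qed
    then show ?thesis by simp
  qed
  finally show "MEI n p (MBD_mat n N x) (MBD_mat n N x i) = (1 / real n) * (1 / real p) * (\<Sum>j\<in>{1..p}. real (n - 2 * min (r i j) (n - 1 - r i j)))"
    unfolding V_def .
qed



theorem proposition1:
  fixes n p N :: nat and x :: "nat \<Rightarrow> nat \<Rightarrow> nat \<Rightarrow> real"
  assumes "n \<ge> 2" and "p \<ge> 1" and "N \<ge> 1"
  defines "U \<equiv> MEI_mat n N x" and "V \<equiv> MBD_mat n N x"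
  shows "((\<forall>j\<in>{1..p}. \<forall>i\<in>{1..n}. \<forall>h\<in>{1..n}. i \<noteq> h \<longrightarrow>
              (\<forall>k1\<in>{1..N}. \<forall>k2\<in>{1..N}. (x i j k1 - x h j k1) * (x i j k2 - x h j k2) > 0))
          \<longrightarrow> (\<forall>i\<in>{1..n}. MBD n p U (U i) \<le> g_fun n (1 - MEI n p V (V i))))
       \<and> (((\<forall>j\<in>{1..p}. \<forall>i\<in>{1..n}. \<forall>h\<in>{1..n}. i \<noteq> h \<longrightarrow>
              (\<forall>k1\<in>{1..N}. \<forall>k2\<in>{1..N}. (x i j k1 - x h j k1) * (x i j k2 - x h j k2) > 0))
            \<and> (\<forall>k\<in>{1..N}. \<forall>i\<in>{1..n}. \<forall>h\<in>{1..n}. i \<noteq> h \<longrightarrow>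
              (\<forall>j\<in>{1..p}. \<forall>l\<in>{1..p}. j \<noteq> l \<longrightarrow> (x i j k - x h j k) * (x i l k - x h l k) > 0)))
          \<longrightarrow> (\<forall>i\<in>{1..n}. MBD n p U (U i) = g_fun n (1 - MEI n p V (V i))))"
proof -
  note n = assms(1) and p = assms(2) and N = assms(3)
  let ?H1 = "\<forall>j\<in>{1..p}. \<forall>i\<in>{1..n}. \<forall>h\<in>{1..n}. i \<noteq> h \<longrightarrow>
              (\<forall>k1\<in>{1..N}. \<forall>k2\<in>{1..N}. (x i j k1 - x h j k1) * (x i j k2 - x h j k2) > 0)"
  have A: "MBD n p U (U i) \<le> g_fun n (1 - MEI n p V (V i))" if H1: ?H1 and i: "i \<in> {1..n}" for i
  proof -
    note c = common[OF n p N H1 i]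
    have "(1 / real (n choose 2)) * (1 / real p) * (\<Sum>j\<in>{1..p}. real (n-1) + real (n - 1 - rk n (\<lambda>a. x a j 1) i) * (real (n-1) - real (n - 1 - rk n (\<lambda>a. x a j 1) i)))
         \<le> g_fun n (1 - (1 / real n) * (1 / real p) * (\<Sum>j\<in>{1..p}. real (n - 2 * min (rk n (\<lambda>a. x a j 1) i) (n - 1 - rk n (\<lambda>a. x a j 1) i))))"
      by (rule final_ineq[where r="\<lambda>j. rk n (\<lambda>a. x a j 1) i", OF n p c(3)])
    then show ?thesis unfolding U_def V_def c(1) c(2) .
  qed
  have B: "MBD n p U (U i) = g_fun n (1 - MEI n p V (V i))"
    if H1: ?H1 and H2: "\<forall>k\<in>{1..N}. \<forall>i\<in>{1..n}. \<forall>h\<in>{1..n}. i \<noteq> h \<longrightarrow>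
              (\<forall>j\<in>{1..p}. \<forall>l\<in>{1..p}. j \<noteq> l \<longrightarrow> (x i j k - x h j k) * (x i l k - x h l k) > 0)"
      and i: "i \<in> {1..n}" for i
  proof -
    note c = common[OF n p N H1 i]
    have N1: "1 \<in> {1..N}" using N by simp
    have p1: "1 \<in> {1..p}" using p by simp
    have same: "rk n (\<lambda>a. x a j 1) i = rk n (\<lambda>a. x a 1 1) i" if j: "j \<in> {1..p}" for j
    proof -
      have "{a \<in> {1..n}. x a j 1 < x i j 1} = {a \<in> {1..n}. x a 1 1 < x i 1 1}"
      proof (intro Collect_cong conj_cong refl)
        fix a assume a: "a \<in> {1..n}"
        show "(x a j 1 < x i j 1) = (x a 1 1 < x i 1 1)"
        proof (cases "a = i \<or> j = 1")
          case False
          then have "(x a j 1 - x i j 1) * (x a 1 1 - x i 1 1) > 0"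
            using H2 N1 a i j p1 by blast
          then show ?thesis by (auto simp: zero_less_mult_iff)
        qed auto
      qed
      then show ?thesis unfolding rk_def by simp
    qed
    have "(1 / real (n choose 2)) * (1 / real p) * (\<Sum>j\<in>{1..p}. real (n-1) + real (n - 1 - rk n (\<lambda>a. x a j 1) i) * (real (n-1) - real (n - 1 - rk n (\<lambda>a. x a j 1) i)))
         = g_fun n (1 - (1 / real n) * (1 / real p) * (\<Sum>j\<in>{1..p}. real (n - 2 * min (rk n (\<lambda>a. x a j 1) i) (n - 1 - rk n (\<lambda>a. x a j 1) i))))"
      by (rule final_eq[where r="\<lambda>j. rk n (\<lambda>a. x a j 1) i", OF n p c(3) same])
    then show ?thesis unfolding U_def V_def c(1) c(2) .
  qed
  show ?thesis using A B by blast
qed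


end
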